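(* Let $N,p,q\in\mathbb{N}$ with $p+q\le N$, let $t=N-p-q$, let $\lambda$ be a partition of length $\le N$, and let $A$ be an $N\times t$ matrix (possibly empty). Let $u=(u_1,\ldots,u_p)$, $v=(v_1,\ldots,v_q)$ be indeterminates (or elements of a field with $u_i\ne v_k$ for all $i,k$). Let $D$ be the determinant of the $N\times N$ matrix whose first $t$ columns are those of $A$, whose column $t+i$ ($1\le i\le p$) is $\operatorname{H}^N_{t+i,\lambda}(u_i,\ldots,u_p,v_1,\ldots,v_q)$, and whose column $t+p+i$ ($1\le i\le q$) is $\operatorname{H}^N_{t+p+i,\lambda}(v_i,\ldots,v_q)$. Let $D'$ be the determinant of the matrix obtained by replacing, for $1\le i\le p$, column $t+i$ by $\operatorname{H}^N_{t+q+i,\lambda}(u_i,\ldots,u_p)$ (other columns unchanged), and let $D''$ be the determinant of the matrix obtained from that one by reversing the order of columns $t+1,\ldots,t+p$. Then \[ D=\frac{D'}{\prod_{i=1}^p\prod_{k=1}^q(u_i-v_k)}=\frac{D''}{(-1)^{p(p-1)/2}\prod_{i=1}^p\prod_{k=1}^q(u_i-v_k)}. \]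
   Context: $\hom_m$ is the complete homogeneous symmetric polynomial of degree $m$ ($\hom_0=1$, $\hom_m=0$ for $m<0$). Partitions are extended by zeros: $\lambda_j=0$ beyond the length. For $s\in\mathbb{N}_0$ and variables $t_1,\ldots,t_m$, $\operatorname{H}^N_{s,\lambda}(t_1,\ldots,t_m)$ denotes the column vector $\bigl[\hom_{s+\lambda_j-j}(t_1,\ldots,t_m)\bigr]_{j=1}^N$. *)

theory Defs
  imports "Jordan_Normal_Form.Determinant"
begin

text \<open>Complete homogeneous symmetric polynomial h_m evaluated at the list of
  field elements ts (sum of all monomials of total degree m in ts);
  h_0 = 1, h_m = 0 for m < 0.  Defined by the standard recursion
  h_m(x, ts) = sum_{j=0..m} x^j h_{m-j}(ts).\<close>
fun hom :: "int \<Rightarrow> 'a::comm_ring_1 list \<Rightarrow> 'a" where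
  "hom m [] = (if m = 0 then 1 else 0)"
| "hom m (x # xs) = (if m < 0 then 0 else (\<Sum>j\<in>{0..nat m}. x ^ j * hom (m - int j) xs))"

text \<open>Entry in row r (0-based; row index j = r+1) of the column vector
  H^N_{s,lambda}(ts), namely h_{s + lambda_j - j}(ts).\<close>
definition Hent :: "nat \<Rightarrow> (nat \<Rightarrow> nat) \<Rightarrow> 'a::comm_ring_1 list \<Rightarrow> nat \<Rightarrow> 'a" where
  "Hent s lam ts r = hom (int s + int (lam (r+1)) - int (r+1)) ts"

text \<open>Partition of length at most N, indexed from 1 (lam 0 is irrelevant).\<close>
definition is_partition_len :: "nat \<Rightarrow> (nat \<Rightarrow> nat) \<Rightarrow> bool" where
  "is_partition_len N lam \<longleftrightarrow> (\<forall>i j. 1 \<le> i \<longrightarrow> i \<le> j \<longrightarrow> lam j \<le> lam i) \<and> (\<forall>j>N. lam j = 0)"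

definition seg :: "(nat \<Rightarrow> 'a) \<Rightarrow> nat \<Rightarrow> nat \<Rightarrow> 'a list" where
  "seg u i p = map u [i..<p+1]"

end

theory Submission
  imports Defs
begin



lemma hom_neg: "m < 0 \<Longrightarrow> hom m xs = 0"
  by (cases xs) auto

lemma hom_zero: "hom 0 xs = 1"
  by (induction xs) auto

lemma hom_L1: "hom m (x # xs) = hom m xs + x * hom (m - 1) (x # xs)"
proof (cases "m < 0")
  case True thus ?thesis by (simp add: hom_neg)
next
  case False
  then obtain n where m: "m = int n" by (metis nonneg_eq_int not_less)
  show ?thesis
  proof (cases n)
    case 0 thus ?thesis using m by (simp add: hom_zero)
  next
    case (Suc k)
    define g where "g j = x ^ j * hom (m - int j) xs" for j
    have nk: "nat m = Suc k" using m Suc by simp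
    have "hom m (x # xs) = (\<Sum>j\<in>{0..nat m}. g j)"
      using False by (simp add: g_def)
    hence "hom m (x # xs) = (\<Sum>j\<in>{0..Suc k}. g j)" unfolding nk .
    also have "\<dots> = g 0 + (\<Sum>j\<in>{0..k}. g (Suc j))"
      using sum.atLeast0_atMost_Suc_shift[of g k] by (simp only: comp_def)
    also have "g 0 = hom m xs" by (simp add: g_def)
    also have "(\<Sum>j\<in>{0..k}. g (Suc j)) = x * hom (m - 1) (x # xs)"
    proof -
      have "nat (m - 1) = k" "\<not> m - 1 < 0" using m Suc by auto
      thus ?thesis by (simp add: g_def sum_distrib_left mult.assoc algebra_simps)
    qed
    finally show ?thesis .
  qed
qed

lemma tri_swap: "(\<Sum>j\<le>(n::nat). \<Sum>l\<le>n - j. f j l) = (\<Sum>l\<le>n. \<Sum>j\<le>n - l. (f j l :: 'a::comm_monoid_add))"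
proof -
  have "(\<Sum>j\<le>n. \<Sum>l\<le>n - j. f j l) = (\<Sum>(j,l)\<in>(SIGMA j:{..n}. {..n-j}). f j l)"
    by (rule sum.Sigma) auto
  also have "\<dots> = (\<Sum>(l,j)\<in>(SIGMA l:{..n}. {..n-l}). f j l)"
    by (rule sum.reindex_bij_witness[where i="\<lambda>(a,b). (b,a)" and j="\<lambda>(a,b). (b,a)"]) auto
  also have "\<dots> = (\<Sum>l\<le>n. \<Sum>j\<le>n - l. f j l)"
    by (rule sum.Sigma[symmetric]) auto
  finally show ?thesis .
qed

lemma hom_swap: "hom m (x # y # xs) = hom m (y # x # xs)"
proof (cases "m < 0")
  case True thus ?thesis by (simp add: hom_neg)
next
  case False
  then obtain n where m: "m = int n" by (metis nonneg_eq_int not_less)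
  have e: "hom (int n) (a # b # xs) = (\<Sum>j\<le>n. \<Sum>l\<le>n - j. a ^ j * (b ^ l * hom (int (n - j - l)) xs))" for a b
  proof -
    have "hom (int n) (a # b # xs) = (\<Sum>j\<le>n. a ^ j * hom (int n - int j) (b # xs))"
      by (simp add: atLeast0AtMost)
    also have "\<dots> = (\<Sum>j\<le>n. a ^ j * hom (int (n - j)) (b # xs))"
      by (rule sum.cong) (auto simp: of_nat_diff)
    also have "\<dots> = (\<Sum>j\<le>n. \<Sum>l\<le>n - j. a ^ j * (b ^ l * hom (int (n - j - l)) xs))"
      by (rule sum.cong) (auto simp: atLeast0AtMost sum_distrib_left of_nat_diff diff_diff_eq intro!: sum.cong)
    finally show ?thesis .
  qed
  show ?thesis unfolding m e
    by (subst tri_swap) (auto intro!: sum.cong simp: algebra_simps diff_commute)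
qed

lemma hom_move: "hom m (xs @ y # ys) = hom m (y # xs @ ys)"
proof (induction xs arbitrary: m)
  case Nil thus ?case by simp
next
  case (Cons x xs)
  have "hom m ((x # xs) @ y # ys) = hom m (x # y # xs @ ys)"
  proof (cases "m < 0")
    case True thus ?thesis by (simp add: hom_neg)
  next
    case False thus ?thesis using Cons by simp
  qed
  also have "\<dots> = hom m (y # x # xs @ ys)" by (rule hom_swap)
  finally show ?case by simp
qed

lemma hom_key: "hom (n + 1) (a # U @ V) = (a - b) * hom n (a # U @ b # V) + hom (n + 1) (U @ b # V)"
proof -
  have 1: "hom (n+1) (a # b # U @ V) = hom (n+1) (b # U @ V) + a * hom n (a # b # U @ V)"
    using hom_L1[of "n+1" a "b # U @ V"] by simp
  have 2: "hom (n+1) (b # a # U @ V) = hom (n+1) (a # U @ V) + b * hom n (b # a # U @ V)"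
    using hom_L1[of "n+1" b "a # U @ V"] by simp
  have s: "hom k (b # a # U @ V) = hom k (a # b # U @ V)" for k by (rule hom_swap)
  have m1: "hom n (a # U @ b # V) = hom n (a # b # U @ V)"
  proof (cases "n < 0")
    case True thus ?thesis by (simp add: hom_neg)
  next
    case False thus ?thesis using hom_move[of _ U b V] by simp
  qed
  show ?thesis using 1 2 s[of "n+1"] s[of n] m1 hom_move[of "n+1" U b V]
    by (simp add: algebra_simps)
qed



definition Mk :: "nat \<Rightarrow> nat \<Rightarrow> nat \<Rightarrow> nat \<Rightarrow> 'a::field mat \<Rightarrow> (nat \<Rightarrow> nat) \<Rightarrow> (nat \<Rightarrow> 'a) \<Rightarrow> (nat \<Rightarrow> 'a) \<Rightarrow> nat \<Rightarrow> 'a mat" where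
  "Mk N t p q A lam u v k = mat N N (\<lambda>(r, c).
      if c < t then A $$ (r, c)
      else if c < t + p then Hent (k + c + 1) lam (seg u (c + 1 - t) p @ seg v (k + 1) q) r
      else Hent (c + 1) lam (seg v (c + 1 - t - p) q) r)"

definition Bm :: "nat \<Rightarrow> nat \<Rightarrow> nat \<Rightarrow> (nat \<Rightarrow> 'a::field) \<Rightarrow> (nat \<Rightarrow> 'a) \<Rightarrow> nat \<Rightarrow> 'a mat" where
  "Bm N t p u v k = mat N N (\<lambda>(r, c).
     (if r = c then (if t \<le> c \<and> c < t + p then u (c + 1 - t) - v (k + 1) else 1) else 0)
   + (if t \<le> c \<and> c < t + p \<and> r = (if c + 1 < t + p then c + 1 else t + p + k) then 1 else 0))"

lemma seg_cons: "i \<le> p \<Longrightarrow> seg u i p = u i # seg u (Suc i) p"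
  unfolding seg_def using upt_conv_Cons[of i "p+1"] by simp

lemma seg_empty: "seg u (Suc p) p = []"
  unfolding seg_def by simp

lemma Hent_key:
  assumes "i \<le> p" "k < q"
  shows "Hent (Suc s) lam (seg u i p @ seg v (k+2) q) r
    = (u i - v (k+1)) * Hent s lam (seg u i p @ seg v (k+1) q) r
      + Hent (Suc s) lam (seg u (Suc i) p @ seg v (k+1) q) r"
proof -
  have sv: "seg v (k+1) q = v (k+1) # seg v (k+2) q"
    using seg_cons[of "k+1" q v] assms by simp
  have e: "int (Suc s) + int (lam (r+1)) - int (r+1) = (int s + int (lam (r+1)) - int (r+1)) + 1"
    by simp
  show ?thesis unfolding Hent_def e sv seg_cons[OF assms(1)] append_Cons
    by (rule hom_key)
qed

lemma col_sum:
  assumes "c < (N::nat)" "b \<Longrightarrow> c' < N" "b \<Longrightarrow> c' \<noteq> c"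
  shows "(\<Sum>i\<in>{0..<N}. f i * ((if i = c then a else 0) + (if b \<and> i = c' then 1 else 0)))
     = f c * a + (if b then f c' else (0::'a::field))"
proof -
  have "(\<Sum>i\<in>{0..<N}. f i * ((if i = c then a else 0) + (if b \<and> i = c' then 1 else 0)))
    = (\<Sum>i\<in>{0..<N}. (if i = c then f c * a else 0)) + (\<Sum>i\<in>{0..<N}. (if i = c' then (if b then f c' else 0) else 0))"
    unfolding sum.distrib[symmetric] by (rule sum.cong) (use assms in auto)
  also have "\<dots> = f c * a + (if b then f c' else 0)"
    using assms by (cases b) auto
  finally show ?thesis .
qed

lemma Mk_step:
  assumes N: "N = t + p + q" and k: "k < q" and A: "A \<in> carrier_mat N t"
  shows "Mk N t p q A lam u v (Suc k) = Mk N t p q A lam u v k * Bm N t p u v k"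
proof (rule eq_matI)
  show "dim_row (Mk N t p q A lam u v (Suc k)) = dim_row (Mk N t p q A lam u v k * Bm N t p u v k)"
    "dim_col (Mk N t p q A lam u v (Suc k)) = dim_col (Mk N t p q A lam u v k * Bm N t p u v k)"
    by (simp_all add: Mk_def Bm_def)
  fix r c assume r: "r < dim_row (Mk N t p q A lam u v k * Bm N t p u v k)"
    and c: "c < dim_col (Mk N t p q A lam u v k * Bm N t p u v k)"
  hence rN: "r < N" and cN: "c < N" by (simp_all add: Mk_def Bm_def)
  define nx where "nx = (if c + 1 < t + p then c + 1 else t + p + k)"
  define dg where "dg = (if t \<le> c \<and> c < t + p then u (c + 1 - t) - v (k + 1) else 1)"
  define b where "b = (t \<le> c \<and> c < t + p)"
  have nxN: "b \<Longrightarrow> nx < N" "b \<Longrightarrow> nx \<noteq> c" using N k cN by (auto simp: nx_def b_def)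
  let ?f = "\<lambda>i. Mk N t p q A lam u v k $$ (r, i)"
  have "(Mk N t p q A lam u v k * Bm N t p u v k) $$ (r, c)
     = (\<Sum>i\<in>{0..<N}. ?f i * ((if i = c then dg else 0) + (if b \<and> i = nx then 1 else 0)))"
    using rN cN by (auto simp: Mk_def Bm_def scalar_prod_def dg_def b_def nx_def intro!: sum.cong)
  also have "\<dots> = ?f c * dg + (if b then ?f nx else 0)"
    by (rule col_sum[OF cN nxN(1) nxN(2)])
  also have "\<dots> = Mk N t p q A lam u v (Suc k) $$ (r, c)"
  proof (cases b)
    case False
    thus ?thesis using rN cN by (auto simp: Mk_def dg_def b_def)
  next
    case True
    define i where "i = c + 1 - t"
    have ip: "i \<le> p" "Suc i = c + 2 - t" using True by (auto simp: b_def i_def)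
    have fnx: "?f nx = Hent (Suc (k + c + 1)) lam (seg u (Suc i) p @ seg v (k + 1) q) r"
    proof (cases "c + 1 < t + p")
      case True
      thus ?thesis using rN nxN `b` by (auto simp: Mk_def nx_def b_def i_def Suc_diff_le)
    next
      case False
      hence ip': "i = p" and c1: "c + 1 = t + p" using `b` by (auto simp: b_def i_def)
      have e1: "?f nx = Hent (Suc (t+p+k)) lam (seg v (Suc k) q) r"
        using rN nxN(1)[OF `b`] False by (auto simp: Mk_def nx_def)
      have e2: "Suc (k + c + 1) = Suc (t+p+k)" using c1 by simp
      show ?thesis unfolding e1 e2 ip' seg_empty by simp
    qed
    have fc: "?f c = Hent (k + c + 1) lam (seg u i p @ seg v (k + 1) q) r"
      using rN cN True by (auto simp: Mk_def b_def i_def)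
    have rhs: "Mk N t p q A lam u v (Suc k) $$ (r, c) = Hent (Suc (k + c + 1)) lam (seg u i p @ seg v (k + 2) q) r"
      using rN cN True by (auto simp: Mk_def b_def i_def)
    show ?thesis unfolding rhs fnx fc Hent_key[OF ip(1) k] using True
      by (simp add: dg_def b_def i_def algebra_simps)
  qed
  finally show "Mk N t p q A lam u v (Suc k) $$ (r, c) = (Mk N t p q A lam u v k * Bm N t p u v k) $$ (r, c)" ..
qed




lemma det_Bm:
  assumes "t + p \<le> N"
  shows "det (Bm N t p u v k) = (\<Prod>i\<in>{1..p}. u i - v (k + 1))"
proof -
  have B: "Bm N t p u v k \<in> carrier_mat N N" by (simp add: Bm_def)
  have "det (Bm N t p u v k) = prod_list (diag_mat (Bm N t p u v k))"
  proof (rule det_lower_triangular[OF _ B])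
    fix i j assume ij: "i < j" "j < N"
    hence "i < N" by simp
    thus "Bm N t p u v k $$ (i, j) = 0" using ij by (simp add: Bm_def)
  qed
  also have "\<dots> = (\<Prod>c\<in>{0..<N}. if t \<le> c \<and> c < t + p then u (c + 1 - t) - v (k + 1) else 1)"
  proof -
    have "diag_mat (Bm N t p u v k) = map (\<lambda>c. if t \<le> c \<and> c < t + p then u (c + 1 - t) - v (k + 1) else 1) [0..<N]"
      unfolding diag_mat_def by (rule map_cong) (auto simp: Bm_def)
    thus ?thesis by (simp add: prod.distinct_set_conv_list[symmetric])
  qed
  also have "\<dots> = (\<Prod>c\<in>{c \<in> {0..<N}. t \<le> c \<and> c < t + p}. u (c + 1 - t) - v (k + 1))"
    by (rule prod.inter_filter[symmetric]) simp
  also have "{c \<in> {0..<N}. t \<le> c \<and> c < t + p} = {t..<t+p}" using assms by auto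
  also have "(\<Prod>c\<in>{t..<t+p}. u (c + 1 - t) - v (k + 1)) = (\<Prod>i\<in>{1..p}. u i - v (k + 1))"
    by (rule prod.reindex_bij_witness[where i="\<lambda>i. i + t - 1" and j="\<lambda>c. c + 1 - t"]) auto
  finally show ?thesis .
qed

lemma Mk_carrier: "Mk N t p q A lam u v k \<in> carrier_mat N N" by (simp add: Mk_def)

lemma det_Mk:
  assumes N: "N = t + p + q" and k: "k \<le> q" and A: "A \<in> carrier_mat N t"
  shows "det (Mk N t p q A lam u v k) = det (Mk N t p q A lam u v 0) * (\<Prod>k'\<in>{1..k}. \<Prod>i\<in>{1..p}. u i - v k')"
  using k
proof (induction k)
  case 0 thus ?case by simp
next
  case (Suc k)
  have B: "Bm N t p u v k \<in> carrier_mat N N" by (simp add: Bm_def)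
  have "det (Mk N t p q A lam u v (Suc k)) = det (Mk N t p q A lam u v k) * det (Bm N t p u v k)"
  proof -
    have kq: "k < q" using Suc.prems by simp
    show ?thesis unfolding Mk_step[OF N kq A] by (rule det_mult[OF Mk_carrier B])
  qed
  also have "det (Bm N t p u v k) = (\<Prod>i\<in>{1..p}. u i - v (Suc k))"
    using det_Bm[of t p N u v k] N by simp
  finally show ?case using Suc by (simp add: prod.nat_ivl_Suc' mult.assoc)
qed

definition revc :: "nat \<Rightarrow> nat \<Rightarrow> nat \<Rightarrow> 'a mat \<Rightarrow> 'a mat" where
  "revc n a m X = mat n n (\<lambda>(r, c). if a \<le> c \<and> c < a + m then X $$ (r, 2 * a + m - 1 - c) else X $$ (r, c))"

lemma det_revc:
  assumes "X \<in> carrier_mat n n" "a + m \<le> n"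
  shows "det (revc n a m X) = (-1) ^ (m * (m - 1) div 2) * det (X :: 'a :: comm_ring_1 mat)"
  using assms
proof (induction m arbitrary: a X rule: less_induct)
  case (less m)
  show ?case
  proof (cases "m < 2")
    case True
    have "revc n a m X = X"
    proof -
      show ?thesis
      proof (rule eq_matI)
        fix i j assume ij: "i < dim_row X" "j < dim_col X"
        show "revc n a m X $$ (i, j) = X $$ (i, j)"
        proof (cases "a \<le> j \<and> j < a + m")
          case True
          hence "j = a" "m = 1" using `m < 2` by auto
          thus ?thesis using ij less.prems by (simp add: revc_def)
        next
          case False
          hence "\<not> (a \<le> j \<and> j < a + m)" by simp
          thus ?thesis using ij less.prems unfolding revc_def by (simp only: index_mat carrier_matD if_False split)
        qed
      qed (use less.prems in \<open>auto simp: revc_def\<close>)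
    qed
    thus ?thesis using True by (cases m) auto
  next
    case False
    let ?Y = "swapcols a (a + m - 1) X"
    have Y: "?Y \<in> carrier_mat n n" using less.prems by simp
    have eq: "revc n a m X = revc n (a + 1) (m - 2) ?Y"
      using less.prems False by (intro eq_matI) (auto simp: revc_def)
    have "det (revc n a m X) = (-1) ^ ((m - 2) * (m - 2 - 1) div 2) * det ?Y"
      unfolding eq using less.IH[of "m - 2" "swapcols a (a + m - 1) X" "a + 1"] Y less.prems False by simp
    also have "det ?Y = - det X"
      using less.prems False by (intro det_swapcols) auto
    also have "(-1::'a) ^ ((m - 2) * (m - 2 - 1) div 2) * - det X = (-1) ^ (m * (m - 1) div 2) * det X"
    proof -
      obtain j where j: "m = j + 2" using False by (metis add.commute le_Suc_ex not_less)
      have "m * (m - 1) div 2 = j * (j - 1) div 2 + 2 * j + 1"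
      proof (cases j)
        case 0 thus ?thesis using j by simp
      next
        case (Suc l)
        have "m * (m - 1) = (Suc l) * l + 2 * (2 * Suc l + 1)" using j Suc by (simp add: algebra_simps)
        thus ?thesis using Suc by simp
      qed
      thus ?thesis using j by (simp add: power_add)
    qed
    finally show ?thesis .
  qed
qed




theorem lemma7p1:
  fixes N p q t :: nat and lam :: "nat \<Rightarrow> nat" and A :: "'a::field mat"
    and u v :: "nat \<Rightarrow> 'a"
  assumes "p + q \<le> N" and "t = N - p - q"
    and "is_partition_len N lam"
    and "A \<in> carrier_mat N t"
    and "\<forall>i\<in>{1..p}. \<forall>k\<in>{1..q}. u i \<noteq> v k"
  defines "M \<equiv> mat N N (\<lambda>(r, c).
      if c < t then A $$ (r, c)
      else if c < t + p then Hent (c + 1) lam (seg u (c + 1 - t) p @ seg v 1 q) r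
      else Hent (c + 1) lam (seg v (c + 1 - t - p) q) r)"
    and "M' \<equiv> mat N N (\<lambda>(r, c).
      if c < t then A $$ (r, c)
      else if c < t + p then Hent (q + c + 1) lam (seg u (c + 1 - t) p) r
      else Hent (c + 1) lam (seg v (c + 1 - t - p) q) r)"
    and "M'' \<equiv> mat N N (\<lambda>(r, c).
      if c < t then A $$ (r, c)
      else if c < t + p then
        Hent (q + (2 * t + p - 1 - c) + 1) lam (seg u ((2 * t + p - 1 - c) + 1 - t) p) r
      else Hent (c + 1) lam (seg v (c + 1 - t - p) q) r)"
    and "P \<equiv> (\<Prod>i\<in>{1..p}. \<Prod>k\<in>{1..q}. u i - v k)"
  shows "det M = det M' / P \<and> det M = det M'' / ((-1) ^ (p * (p - 1) div 2) * P)"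
proof -
  have N: "N = t + p + q" using assms(1,2) by simp
  have A: "A \<in> carrier_mat N t" by fact
  have M0: "M = Mk N t p q A lam u v 0" unfolding M_def Mk_def add_0 ..
  have Mq: "M' = Mk N t p q A lam u v q" 
  proof -
    have e: "seg v (q + 1) q = []" by (simp add: seg_def)
    show ?thesis unfolding M'_def Mk_def e append_Nil2 ..
  qed
  have M'c: "M' \<in> carrier_mat N N" unfolding M'_def by simp
  have M2: "M'' = revc N t p M'"
  proof (rule eq_matI)
    fix r c assume rc: "r < dim_row (revc N t p M')" "c < dim_col (revc N t p M')"
    hence r: "r < N" and c: "c < N" by (simp_all add: revc_def)
    show "M'' $$ (r, c) = revc N t p M' $$ (r, c)"
    proof (cases "t \<le> c \<and> c < t + p")
      case True
      define c' where "c' = 2 * t + p - 1 - c"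
      have c': "c' < N" "\<not> c' < t" "c' < t + p" using True N by (auto simp: c'_def)
      have "revc N t p M' $$ (r, c) = M' $$ (r, c')" using r c True by (simp add: revc_def c'_def)
      also have "\<dots> = Hent (q + c' + 1) lam (seg u (c' + 1 - t) p) r"
        using r c' unfolding M'_def by simp
      also have "\<dots> = M'' $$ (r, c)" using r c True unfolding M''_def c'_def by simp
      finally show ?thesis ..
    next
      case False
      thus ?thesis using r c unfolding M''_def M'_def revc_def by auto
    qed
  qed (simp_all add: M''_def revc_def M'_def)
  have P: "P = (\<Prod>k'\<in>{1..q}. \<Prod>i\<in>{1..p}. u i - v k')"
    unfolding P_def by (rule prod.swap)
  have dM': "det M' = det M * P"
    unfolding Mq M0 P using det_Mk[OF N _ A, of q] by simp
  have P0: "P \<noteq> 0" unfolding P_def using assms(5) by (simp add: prod_zero_iff)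
  have dM'': "det M'' = (-1) ^ (p * (p - 1) div 2) * det M'"
    unfolding M2 by (rule det_revc[OF M'c]) (use N in simp)
  show ?thesis using P0 unfolding dM'' dM' by simp
qed


end
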